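(* Let $G$ be a countable group, $\preceq$ a left-invariant total order on $G$, and $x\in G$ a central element which is dominant for $\preceq$. Let $(\phi,t)$ be a dynamical realization of $\preceq$ adapted to $x$. Then $T_{(G,\preceq,\rho_x)}=T_{\mathbb{R}}\circ\phi$.
   Context: $x$ is dominant for $\preceq$ if right multiplication $\rho_x(g)=gx$ is dominant: for all $a,b\in G$ there is $n\in\mathbb{N}$ with $ax^n\succ b$. $T_{(G,\preceq,\rho_x)}(g):=\lim_{n\to\infty}\frac1n h_T(g^n,e)$, where $h_T(a,b)=\inf\{m\in\mathbb{Z}: bx^m\succeq a\}$. A dynamical realization of $\preceq$ is a pair $(\phi,t)$ of an injective homomorphism $\phi:G\to{\rm Homeo}^+(\mathbb{R})$ and an injective map $t:G\to\mathbb{R}$ with $t(gh)=\phi(g)(t(h))$, $t(e)=0$, $\inf_g t(g)=-\infty$, $\sup_g t(g)=\infty$, and $f\prec g\Leftrightarrow \phi(f)(0)<\phi(g)(0)$. It is adapted to $x$ if $\phi(x)$ is the translation $s\mapsto s+1$; then $\phi(G)\subset{\rm Homeo}^+_{\mathbb{Z}}(\mathbb{R})$ (homeomorphisms commuting with $s\mapsto s+1$). $T_{\mathbb{R}}(\psi)=\lim_n\psi^n(0)/n$ is the translation number on ${\rm Homeo}^+_{\mathbb{Z}}(\mathbb{R})$. *)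

theory Defs
  imports "HOL-Analysis.Analysis" "HOL-Algebra.Group"
begin

definition left_inv_total_order :: "('a, 'b) monoid_scheme \<Rightarrow> ('a \<Rightarrow> 'a \<Rightarrow> bool) \<Rightarrow> bool" where
  "left_inv_total_order G lq \<longleftrightarrow>
     (\<forall>a\<in>carrier G. lq a a) \<and>
     (\<forall>a\<in>carrier G. \<forall>b\<in>carrier G. lq a b \<and> lq b a \<longrightarrow> a = b) \<and>
     (\<forall>a\<in>carrier G. \<forall>b\<in>carrier G. \<forall>c\<in>carrier G. lq a b \<and> lq b c \<longrightarrow> lq a c) \<and>
     (\<forall>a\<in>carrier G. \<forall>b\<in>carrier G. lq a b \<or> lq b a) \<and>
     (\<forall>a\<in>carrier G. \<forall>b\<in>carrier G. \<forall>h\<in>carrier G. lq a b \<longrightarrow> lq (h \<otimes>\<^bsub>G\<^esub> a) (h \<otimes>\<^bsub>G\<^esub> b))"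

definition strict_of :: "('a \<Rightarrow> 'a \<Rightarrow> bool) \<Rightarrow> 'a \<Rightarrow> 'a \<Rightarrow> bool" where
  "strict_of lq a b \<longleftrightarrow> lq a b \<and> a \<noteq> b"

definition central_elem :: "('a, 'b) monoid_scheme \<Rightarrow> 'a \<Rightarrow> bool" where
  "central_elem G x \<longleftrightarrow> x \<in> carrier G \<and> (\<forall>g\<in>carrier G. x \<otimes>\<^bsub>G\<^esub> g = g \<otimes>\<^bsub>G\<^esub> x)"

definition dominant :: "('a, 'b) monoid_scheme \<Rightarrow> ('a \<Rightarrow> 'a \<Rightarrow> bool) \<Rightarrow> 'a \<Rightarrow> bool" where
  "dominant G lq x \<longleftrightarrow> x \<in> carrier G \<and>
     (\<forall>a\<in>carrier G. \<forall>b\<in>carrier G. \<exists>n::nat. strict_of lq b (a \<otimes>\<^bsub>G\<^esub> (x [^]\<^bsub>G\<^esub> n)))"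

definition hT :: "('a, 'b) monoid_scheme \<Rightarrow> ('a \<Rightarrow> 'a \<Rightarrow> bool) \<Rightarrow> 'a \<Rightarrow> 'a \<Rightarrow> 'a \<Rightarrow> real" where
  "hT G lq x a b = Inf {real_of_int m | m::int. lq a (b \<otimes>\<^bsub>G\<^esub> (x [^]\<^bsub>G\<^esub> m))}"

definition transl_order :: "('a, 'b) monoid_scheme \<Rightarrow> ('a \<Rightarrow> 'a \<Rightarrow> bool) \<Rightarrow> 'a \<Rightarrow> 'a \<Rightarrow> real" where
  "transl_order G lq x g = lim (\<lambda>n::nat. hT G lq x (g [^]\<^bsub>G\<^esub> n) \<one>\<^bsub>G\<^esub> / real n)"

definition homeo_plus :: "(real \<Rightarrow> real) \<Rightarrow> bool" where
  "homeo_plus f \<longleftrightarrow> (\<exists>g. homeomorphism UNIV UNIV f g) \<and> strict_mono f"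

definition transl_real :: "(real \<Rightarrow> real) \<Rightarrow> real" where
  "transl_real \<psi> = lim (\<lambda>n::nat. (\<psi> ^^ n) 0 / real n)"

definition dyn_realization ::
  "('a, 'b) monoid_scheme \<Rightarrow> ('a \<Rightarrow> 'a \<Rightarrow> bool) \<Rightarrow> ('a \<Rightarrow> real \<Rightarrow> real) \<Rightarrow> ('a \<Rightarrow> real) \<Rightarrow> bool" where
  "dyn_realization G lq \<phi> t \<longleftrightarrow>
     (\<forall>g\<in>carrier G. homeo_plus (\<phi> g)) \<and>
     (\<forall>g\<in>carrier G. \<forall>h\<in>carrier G. \<phi> (g \<otimes>\<^bsub>G\<^esub> h) = \<phi> g \<circ> \<phi> h) \<and>
     inj_on \<phi> (carrier G) \<and>
     inj_on t (carrier G) \<and>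
     (\<forall>g\<in>carrier G. \<forall>h\<in>carrier G. t (g \<otimes>\<^bsub>G\<^esub> h) = \<phi> g (t h)) \<and>
     t \<one>\<^bsub>G\<^esub> = 0 \<and>
     (\<forall>r::real. \<exists>g\<in>carrier G. t g < r) \<and>
     (\<forall>r::real. \<exists>g\<in>carrier G. r < t g) \<and>
     (\<forall>f\<in>carrier G. \<forall>g\<in>carrier G. strict_of lq f g \<longleftrightarrow> \<phi> f 0 < \<phi> g 0)"

definition adapted_to :: "('a \<Rightarrow> real \<Rightarrow> real) \<Rightarrow> 'a \<Rightarrow> bool" where
  "adapted_to \<phi> x \<longleftrightarrow> \<phi> x = (\<lambda>s. s + 1)"

end

theory Submission
  imports Defs
begin

lemma shift_int:
  fixes F :: "real \<Rightarrow> real"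
  assumes h: "\<And>s. F (s + 1) = F s + 1"
  shows "F (s + real_of_int k) = F s + real_of_int k"
proof -
  have nat: "F (s + real n) = F s + real n" for s n
    by (induction n arbitrary: s) (simp_all add: h[of "_ + real _", simplified add.assoc] add.assoc, metis add.commute h add.assoc)
  show ?thesis
  proof (cases "k \<ge> 0")
    case True then show ?thesis using nat[of s "nat k"] by simp
  next
    case False
    have "F s = F ((s + real_of_int k) + real (nat (-k)))" using False by simp
    also have "\<dots> = F (s + real_of_int k) + real (nat (-k))" by (rule nat)
    finally show ?thesis using False by simp
  qed
qed

lemma funpow_shift:
  fixes \<psi> :: "real \<Rightarrow> real"
  assumes h: "\<And>s. \<psi> (s + 1) = \<psi> s + 1"
  shows "(\<psi>^^n) (s + 1) = (\<psi>^^n) s + 1"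
  by (induction n arbitrary: s) (simp_all add: h)

lemma disp_bound:
  fixes F :: "real \<Rightarrow> real"
  assumes h: "\<And>s. F (s + 1) = F s + 1" and m: "mono F"
  shows "\<bar>F y - y - F 0\<bar> \<le> 1"
proof -
  let ?k = "\<lfloor>y\<rfloor>"
  have a: "F (real_of_int ?k) = F 0 + ?k" using shift_int[where F=F, OF h, of 0 ?k] by simp
  have b: "F (real_of_int ?k + 1) = F 0 + ?k + 1" using a h by simp
  have "F (real_of_int ?k) \<le> F y" by (rule monoD[OF m]) simp
  moreover have "F y \<le> F (real_of_int ?k + 1)" by (rule monoD[OF m]) linarith
  moreover have "real_of_int ?k \<le> y" "y < real_of_int ?k + 1" by linarith+
  ultimately show ?thesis using a b unfolding abs_le_iff by linarith
qed

lemma transl_conv: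
  fixes \<psi> :: "real \<Rightarrow> real"
  assumes h: "\<And>s. \<psi> (s + 1) = \<psi> s + 1" and m: "mono \<psi>"
  shows "convergent (\<lambda>n. (\<psi>^^n) 0 / real n)"
proof -
  define a where "a n = (\<psi>^^n) 0" for n
  have mn: "mono (\<psi>^^n)" for n using m by (simp add: funpow_mono monoI monoD)
  have add: "\<bar>a (m + n) - a n - a m\<bar> \<le> 1" for m n
  proof -
    have "a (m + n) = (\<psi>^^m) (a n)" by (simp add: a_def funpow_add)
    then show ?thesis using disp_bound[OF funpow_shift[where \<psi>=\<psi>, OF h] mn, of m "a n"] by (simp add: a_def)
  qed
  have mul: "\<bar>a (k * n) - real k * a n\<bar> \<le> real k" for k n
  proof (induction k)
    case 0 then show ?case by (simp add: a_def)
  next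
    case (Suc k)
    have "a (Suc k * n) = a (n + k * n)" by simp
    then show ?case using add[of n "k*n"] Suc by (simp add: algebra_simps)
  qed
  have key: "\<bar>a m / m - a n / n\<bar> \<le> 1 / m + 1 / n" if "m \<ge> 1" "n \<ge> 1" for m n
  proof -
    have m0: "real m > 0" "real n > 0" using that by auto
    have 1: "\<bar>a (n * m) - real n * a m\<bar> \<le> real n" by (rule mul)
    have 2: "\<bar>a (n * m) - real m * a n\<bar> \<le> real m" using mul[of m n] by (simp add: mult.commute)
    have e1: "\<bar>a (n*m) / (real n * real m) - a m / m\<bar> \<le> 1 / m"
    proof -
      have "\<bar>a (n*m) / (real n * real m) - a m / m\<bar> = \<bar>a (n * m) - real n * a m\<bar> / (real n * real m)"
        using m0 by (simp add: field_simps abs_divide)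
      also have "\<dots> \<le> real n / (real n * real m)" by (rule divide_right_mono[OF 1]) (use m0 in simp)
      also have "\<dots> = 1 / m" using m0 by simp
      finally show ?thesis .
    qed
    have e2: "\<bar>a (n*m) / (real n * real m) - a n / n\<bar> \<le> 1 / n"
    proof -
      have "\<bar>a (n*m) / (real n * real m) - a n / n\<bar> = \<bar>a (n * m) - real m * a n\<bar> / (real n * real m)"
        using m0 by (simp add: field_simps abs_divide)
      also have "\<dots> \<le> real m / (real n * real m)" by (rule divide_right_mono[OF 2]) (use m0 in simp)
      also have "\<dots> = 1 / n" using m0 by simp
      finally show ?thesis .
    qed
    show ?thesis using e1 e2 unfolding abs_le_iff by linarith
  qed
  have "Cauchy (\<lambda>n. a n / real n)"
  proof (rule metric_CauchyI)
    fix e :: real assume e: "e > 0"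
    obtain M :: nat where M: "real M > 3 / e" using reals_Archimedean2 by blast
    have M1: "M \<ge> 1"
    proof (rule ccontr)
      assume "\<not> M \<ge> 1" then have "M = 0" by simp
      then show False using M e by simp
    qed
    have Mp: "real M > 0" using M1 by simp
    have "1 / real M < e / 2"
      using M e Mp by (simp add: field_simps)
    show "\<exists>M. \<forall>m\<ge>M. \<forall>n\<ge>M. dist (a m / real m) (a n / real n) < e"
    proof (intro exI allI impI)
      fix m n assume "m \<ge> M" "n \<ge> M"
      then have "1 / real m \<le> 1 / real M" "1 / real n \<le> 1 / real M" using Mp
        by (auto intro!: divide_left_mono)
      then show "dist (a m / real m) (a n / real n) < e"
        using key[of m n] \<open>m \<ge> M\<close> \<open>n \<ge> M\<close> M1 \<open>1 / real M < e / 2\<close> by (simp add: dist_real_def)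
    qed
  qed
  then show ?thesis by (simp add: Cauchy_convergent_iff a_def)
qed


lemma ceil_div_tendsto:
  fixes a :: "nat \<Rightarrow> real"
  assumes "(\<lambda>n. a n / real n) \<longlonglongrightarrow> L"
  shows "(\<lambda>n. real_of_int \<lceil>a n\<rceil> / real n) \<longlonglongrightarrow> L"
proof -
  have d: "(\<lambda>n. (real_of_int \<lceil>a n\<rceil> - a n) / real n) \<longlonglongrightarrow> 0"
  proof (rule Lim_null_comparison[OF _ lim_1_over_n])
    show "\<forall>\<^sub>F n in sequentially. norm ((real_of_int \<lceil>a n\<rceil> - a n) / real n) \<le> 1 / real n"
    proof (rule always_eventually, rule allI)
      fix n
      have "0 \<le> real_of_int \<lceil>a n\<rceil> - a n" "real_of_int \<lceil>a n\<rceil> - a n \<le> 1" by linarith+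
      then show "norm ((real_of_int \<lceil>a n\<rceil> - a n) / real n) \<le> 1 / real n"
        by (simp add: divide_right_mono)
    qed
  qed
  have "(\<lambda>n. a n / real n + (real_of_int \<lceil>a n\<rceil> - a n) / real n) \<longlonglongrightarrow> L + 0"
    by (rule tendsto_add[OF assms d])
  then show ?thesis by (simp add: diff_divide_distrib)
qed

theorem lemma4p11:
  fixes G :: "('a, 'b) monoid_scheme" and lq :: "'a \<Rightarrow> 'a \<Rightarrow> bool"
    and x :: 'a and \<phi> :: "'a \<Rightarrow> real \<Rightarrow> real" and t :: "'a \<Rightarrow> real"
  assumes "group G" and "countable (carrier G)"
    and "left_inv_total_order G lq"
    and "central_elem G x" and "dominant G lq x"
    and "dyn_realization G lq \<phi> t" and "adapted_to \<phi> x"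
  shows "\<forall>g\<in>carrier G. transl_order G lq x g = transl_real (\<phi> g)"
proof
  interpret group G by fact
  have xG: "x \<in> carrier G" and cent: "\<And>g. g \<in> carrier G \<Longrightarrow> x \<otimes>\<^bsub>G\<^esub> g = g \<otimes>\<^bsub>G\<^esub> x"
    using assms(4) by (auto simp: central_elem_def)
  have px: "\<phi> x = (\<lambda>s. s + 1)" using assms(7) by (simp add: adapted_to_def)
  have hp: "\<And>g. g \<in> carrier G \<Longrightarrow> homeo_plus (\<phi> g)"
    and hom: "\<And>g h. g \<in> carrier G \<Longrightarrow> h \<in> carrier G \<Longrightarrow> \<phi> (g \<otimes>\<^bsub>G\<^esub> h) = \<phi> g \<circ> \<phi> h"
    and tinj: "inj_on t (carrier G)"
    and tm: "\<And>g h. g \<in> carrier G \<Longrightarrow> h \<in> carrier G \<Longrightarrow> t (g \<otimes>\<^bsub>G\<^esub> h) = \<phi> g (t h)"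
    and t1: "t \<one>\<^bsub>G\<^esub> = 0"
    and ord: "\<And>f g. f \<in> carrier G \<Longrightarrow> g \<in> carrier G \<Longrightarrow> strict_of lq f g \<longleftrightarrow> \<phi> f 0 < \<phi> g 0"
    using assms(6) unfolding dyn_realization_def by blast+
  have refl: "\<And>a. a \<in> carrier G \<Longrightarrow> lq a a" using assms(3) by (simp add: left_inv_total_order_def)
  have tphi: "t g = \<phi> g 0" if "g \<in> carrier G" for g
    using tm[OF that one_closed] that t1 by simp
  have lq_iff: "lq a b \<longleftrightarrow> t a \<le> t b" if "a \<in> carrier G" "b \<in> carrier G" for a b
  proof
    assume "lq a b"
    then show "t a \<le> t b" using ord[OF that] tphi that by (cases "a = b") (auto simp: strict_of_def)
  next
    assume le: "t a \<le> t b"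
    show "lq a b"
    proof (cases "a = b")
      case True then show ?thesis using refl that by simp
    next
      case False
      then have "t a \<noteq> t b" using tinj that by (meson inj_onD)
      then have "t a < t b" using le by simp
      then show ?thesis using ord[OF that] tphi that by (simp add: strict_of_def)
    qed
  qed
  have xpow: "\<phi> (x [^]\<^bsub>G\<^esub> (n::nat)) = (\<lambda>s. s + real n)" for n
  proof (induction n)
    case 0
    have "\<phi> \<one>\<^bsub>G\<^esub> = \<phi> \<one>\<^bsub>G\<^esub> \<circ> \<phi> \<one>\<^bsub>G\<^esub>" using hom[OF one_closed one_closed] by simp
    moreover have "inj (\<phi> \<one>\<^bsub>G\<^esub>)" using hp[OF one_closed] strict_mono_imp_inj_on
      by (auto simp: homeo_plus_def)
    ultimately have "\<phi> \<one>\<^bsub>G\<^esub> s = s" for s by (metis comp_apply injD)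
    then show ?case by auto
  next
    case (Suc n)
    then show ?case using hom[OF nat_pow_closed[OF xG] xG] px by (auto simp: algebra_simps)
  qed
  have txint: "t (x [^]\<^bsub>G\<^esub> (m::int)) = real_of_int m" for m
  proof (cases "m < 0")
    case False
    then have eq: "x [^]\<^bsub>G\<^esub> m = x [^]\<^bsub>G\<^esub> (nat m)" by (metis int_pow_int nat_0_le not_less)
    have "t (x [^]\<^bsub>G\<^esub> m) = \<phi> (x [^]\<^bsub>G\<^esub> (nat m)) 0"
      unfolding eq by (rule tphi) (rule nat_pow_closed[OF xG])
    also have "\<dots> = real (nat m)" by (simp only: xpow)
    finally show ?thesis using False by simp
  next
    case True
    define y where "y = x [^]\<^bsub>G\<^esub> (nat (-m))"
    have yG: "y \<in> carrier G" using xG by (simp add: y_def)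
    have e: "x [^]\<^bsub>G\<^esub> m = inv\<^bsub>G\<^esub> y" using True unfolding y_def by (subst int_pow_def2) (simp only: if_True)
    have "\<phi> y (\<phi> (inv\<^bsub>G\<^esub> y) 0) = \<phi> (y \<otimes>\<^bsub>G\<^esub> inv\<^bsub>G\<^esub> y) 0" using hom[OF yG inv_closed[OF yG]] by simp
    also have "\<dots> = t \<one>\<^bsub>G\<^esub>" using tphi yG by simp
    finally have "\<phi> (inv\<^bsub>G\<^esub> y) 0 + real (nat (-m)) = 0" using xpow t1 by (simp add: y_def)
    then show ?thesis using e tphi yG True by simp
  qed
  have hT_eq: "hT G lq x a \<one>\<^bsub>G\<^esub> = real_of_int \<lceil>t a\<rceil>" if aG: "a \<in> carrier G" for a
  proof -
    have "{real_of_int m | m::int. lq a (\<one>\<^bsub>G\<^esub> \<otimes>\<^bsub>G\<^esub> x [^]\<^bsub>G\<^esub> m)} = {real_of_int m | m::int. t a \<le> real_of_int m}"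
      using lq_iff[OF aG] xG txint by simp
    then have "hT G lq x a \<one>\<^bsub>G\<^esub> = Inf {real_of_int m | m::int. t a \<le> real_of_int m}"
      by (simp add: hT_def)
    also have "\<dots> = real_of_int \<lceil>t a\<rceil>"
      by (rule cInf_eq_minimum) (auto, linarith)
    finally show ?thesis .
  qed
  fix g assume gG: "g \<in> carrier G"
  define \<psi> where "\<psi> = \<phi> g"
  have gpow: "\<phi> (g [^]\<^bsub>G\<^esub> (n::nat)) = \<psi> ^^ n" for n
  proof (induction n)
    case 0
    have "\<phi> \<one>\<^bsub>G\<^esub> = \<phi> \<one>\<^bsub>G\<^esub> \<circ> \<phi> \<one>\<^bsub>G\<^esub>" using hom[OF one_closed one_closed] by simp
    moreover have "inj (\<phi> \<one>\<^bsub>G\<^esub>)" using hp[OF one_closed] strict_mono_imp_inj_on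
      by (auto simp: homeo_plus_def)
    ultimately have "\<phi> \<one>\<^bsub>G\<^esub> s = s" for s by (metis comp_apply injD)
    then show ?case by auto
  next
    case (Suc n)
    then show ?case using hom[OF nat_pow_closed[OF gG] gG] by (simp add: \<psi>_def funpow_swap1)
  qed
  have sh: "\<psi> (s + 1) = \<psi> s + 1" for s
  proof -
    have "\<phi> (g \<otimes>\<^bsub>G\<^esub> x) = \<phi> (x \<otimes>\<^bsub>G\<^esub> g)" using cent[OF gG] by simp
    then have "(\<psi> \<circ> \<phi> x) s = (\<phi> x \<circ> \<psi>) s" using hom gG xG by (simp add: \<psi>_def)
    then show ?thesis using px by simp
  qed
  have mo: "mono \<psi>" using hp[OF gG] by (auto simp: homeo_plus_def \<psi>_def intro: strict_mono_mono)
  obtain L where L: "(\<lambda>n. (\<psi>^^n) 0 / real n) \<longlonglongrightarrow> L"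
    using transl_conv[of \<psi>, OF sh mo] by (auto simp: convergent_def)
  have r: "transl_real (\<phi> g) = L" using L by (simp add: transl_real_def \<psi>_def limI)
  have "(\<lambda>n. hT G lq x (g [^]\<^bsub>G\<^esub> n) \<one>\<^bsub>G\<^esub> / real n) = (\<lambda>n. real_of_int \<lceil>(\<psi>^^n) 0\<rceil> / real n)"
    using hT_eq gG tphi gpow by simp
  then have "transl_order G lq x g = L"
    using ceil_div_tendsto[OF L] by (simp add: transl_order_def limI)
  then show "transl_order G lq x g = transl_real (\<phi> g)" using r by simp
qed

end
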